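(* Let $\epsilon\in(0,1)$, let $C$ be an integer with $C\ge\frac{\log(6/\epsilon)}{\log(1/(1-\epsilon/12))}+1$, and let $\epsilon'=\epsilon/(12C)$. Let $(t_1^{(\tau)},t_2^{(\tau)})\in[0,1]^2$, $\tau=1,\dots,C$, satisfy for every $\tau<C$ $$\big|t_1^{(\tau+1)}-\big(1-(1-t_1^{(\tau)})(1-t_2^{(\tau)})\big)\big|\le5\epsilon',\qquad \big|t_2^{(\tau+1)}-t_1^{(\tau)}t_2^{(\tau)}\big|\le\epsilon'.$$ Then $\big|\min(1,t_1^{(1)}+t_2^{(1)})-t_1^{(C)}\big|\le\epsilon$. Consequently, an addition gate $v\mapsto\min(1,v_j+v_k)$ can be simulated to within error $\epsilon$ by $O(\log(1/\epsilon)/\epsilon)$ gates each computing either $v\mapsto 1-v_j$ or $v\mapsto v_jv_k$, each satisfied up to error $\epsilon'=O(\epsilon^2)$. *)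

theory Defs
  imports Complex_Main
begin

end

theory Submission
  imports Defs
begin

lemma final_comb:
  fixes a b s0 d m :: real
  assumes "0 \<le> a" "a \<le> 1" "0 \<le> b" "b \<le> 1" "\<bar>a + b - s0\<bar> \<le> d" "m = min (1 - a) b"
  shows "\<bar>min 1 s0 - a\<bar> \<le> d + m"
  using assms by (auto simp: min_def abs_if split: if_splits)

lemma min_step:
  fixes u b th :: real
  assumes "0 \<le> u" "u \<le> 1" "0 \<le> b" "b \<le> 1" "0 \<le> th"
  shows "min (u * (1 - b)) (b * (1 - u)) \<le> max ((1 - th) * min u b) th"
proof (cases "u \<le> b")
  case True
  have "u * (1 - b) \<le> u * (1 - u)" using True assms by (simp add: mult_left_mono)
  moreover have "u * (1 - u) \<le> max ((1 - th) * u) th"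
  proof (cases "u \<ge> th")
    case True then have "u * (1 - u) \<le> u * (1 - th)" using assms by (simp add: mult_left_mono)
    then show ?thesis by (simp add: mult.commute)
  next
    case False then have "u * (1 - u) \<le> th" using assms
      by (smt (verit) mult_left_le)
    then show ?thesis by simp
  qed
  ultimately show ?thesis using True by (simp add: min_def)
next
  case False
  have "b * (1 - u) \<le> b * (1 - b)" using False assms by (simp add: mult_left_mono)
  moreover have "b * (1 - b) \<le> max ((1 - th) * b) th"
  proof (cases "b \<ge> th")
    case True then have "b * (1 - b) \<le> b * (1 - th)" using assms by (simp add: mult_left_mono)
    then show ?thesis by (simp add: mult.commute)
  next
    case False then have "b * (1 - b) \<le> th" using assms
      by (smt (verit) mult_left_le)
    then show ?thesis by simp
  qed
  ultimately show ?thesis using False by (simp add: min_def)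
qed

theorem mainTheorem20:
  fixes \<epsilon> :: real and C :: nat and t1 t2 :: "nat \<Rightarrow> real"
  assumes eps: "0 < \<epsilon>" "\<epsilon> < 1"
    and C_bound: "real C \<ge> ln (6 / \<epsilon>) / ln (1 / (1 - \<epsilon> / 12)) + 1"
    and range1: "\<And>\<tau>. 1 \<le> \<tau> \<Longrightarrow> \<tau> \<le> C \<Longrightarrow> 0 \<le> t1 \<tau> \<and> t1 \<tau> \<le> 1"
    and range2: "\<And>\<tau>. 1 \<le> \<tau> \<Longrightarrow> \<tau> \<le> C \<Longrightarrow> 0 \<le> t2 \<tau> \<and> t2 \<tau> \<le> 1"
    and step1: "\<And>\<tau>. 1 \<le> \<tau> \<Longrightarrow> \<tau> < C \<Longrightarrow>
       \<bar>t1 (\<tau> + 1) - (1 - (1 - t1 \<tau>) * (1 - t2 \<tau>))\<bar> \<le> 5 * (\<epsilon> / (12 * real C))"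
    and step2: "\<And>\<tau>. 1 \<le> \<tau> \<Longrightarrow> \<tau> < C \<Longrightarrow>
       \<bar>t2 (\<tau> + 1) - t1 \<tau> * t2 \<tau>\<bar> \<le> \<epsilon> / (12 * real C)"
  shows "\<bar>min 1 (t1 1 + t2 1) - t1 C\<bar> \<le> \<epsilon>"
proof -
  define q where "q = 1 - \<epsilon> / 12"
  define r where "r = 1 - \<epsilon> / 4"
  define \<delta> where "\<delta> = \<epsilon> / (12 * real C)"
  define m where "m = (\<lambda>\<tau>. min (1 - t1 \<tau>) (t2 \<tau>))"
  have q0: "0 < q" "q < 1" using eps by (auto simp: q_def)
  have lnq: "ln (1 / q) > 0" using q0 by simp
  have ln6: "ln (6 / \<epsilon>) \<ge> 1"
  proof -
    have "exp 1 \<le> 6 / \<epsilon>"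
    proof -
      have "exp (1::real) \<le> 3" using exp_le by simp
      also have "3 \<le> 6 / \<epsilon>" using eps by (simp add: field_simps)
      finally show ?thesis .
    qed
    then show ?thesis using eps by (simp add: ln_ge_iff)
  qed
  have lnq_le: "ln (1 / q) \<le> \<epsilon> / 11"
  proof -
    have "ln (1/q) \<le> 1/q - 1" using q0 by (intro ln_le_minus_one) simp
    also have "1/q - 1 = (\<epsilon>/12) / q" using q0 by (simp add: q_def field_simps)
    also have "\<dots> \<le> (\<epsilon>/12) / (11/12)" using eps q0
      by (intro divide_left_mono) (auto simp: q_def)
    finally show ?thesis by simp
  qed
  have Cq: "real C - 1 \<ge> ln (6 / \<epsilon>) / ln (1 / q)" using C_bound by (simp add: q_def)
  have "ln (6 / \<epsilon>) / ln (1 / q) \<ge> 1 / (\<epsilon> / 11)"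
    using ln6 lnq lnq_le eps by (intro frac_le) auto
  then have C11: "real C - 1 \<ge> 11 / \<epsilon>" using Cq by simp
  have Cpos: "real C > 0" using C11 eps
    by (smt (verit) divide_pos_pos)
  have Cge1: "C \<ge> 1" using Cpos by simp
  have Cbig: "real C * \<epsilon> \<ge> 11" using C11 eps
    by (smt (verit) divide_le_eq mult.commute mult_le_cancel_left_pos)
  have qpow: "q ^ (C - 1) \<le> \<epsilon> / 6"
  proof -
    have "ln (6 / \<epsilon>) \<le> (real C - 1) * ln (1 / q)" using Cq lnq by (simp add: pos_divide_le_eq)
    also have "\<dots> = real (C - 1) * ln (1/q)" using Cge1 by (simp add: of_nat_diff)
    also have "\<dots> = ln ((1/q) ^ (C - 1))" using q0 by (simp add: ln_realpow)
    finally have "6 / \<epsilon> \<le> (1/q) ^ (C-1)" using eps q0 by (simp add: ln_le_cancel_iff del: power_one_over)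
    then have "6 / \<epsilon> \<le> 1 / q ^ (C - 1)" by (simp add: power_one_over)
    then show ?thesis using eps q0
      by (simp add: field_simps)
  qed
  have rpow: "r ^ (C - 1) \<le> \<epsilon> / 4"
  proof -
    have "r ^ (C - 1) \<le> q ^ (C - 1)" using eps by (intro power_mono) (auto simp: r_def q_def)
    then show ?thesis using qpow eps by simp
  qed
  have r0: "0 \<le> r" "r < 1" using eps by (auto simp: r_def)
  have mstep: "m (\<tau> + 1) \<le> max (r * m \<tau>) (\<epsilon>/4) + 5 * \<delta>" if "1 \<le> \<tau>" "\<tau> < C" for \<tau>
  proof -
    have R1: "0 \<le> t1 \<tau>" "t1 \<tau> \<le> 1" using range1 that by auto
    have R2: "0 \<le> t2 \<tau>" "t2 \<tau> \<le> 1" using range2 that by auto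
    have d0: "0 \<le> \<delta>" using eps by (simp add: \<delta>_def)
    have a: "1 - t1 (\<tau>+1) \<le> (1 - t1 \<tau>) * (1 - t2 \<tau>) + 5 * \<delta>"
      using step1[OF that] by (simp add: \<delta>_def abs_le_iff)
    have b0: "t2 (\<tau>+1) \<le> t1 \<tau> * t2 \<tau> + \<delta>"
      using step2[OF that] by (simp add: \<delta>_def abs_le_iff)
    have b: "t2 (\<tau>+1) \<le> t2 \<tau> * (1 - (1 - t1 \<tau>)) + 5 * \<delta>"
      using b0 d0 by (simp add: mult.commute)
    have "m (\<tau>+1) \<le> min ((1 - t1 \<tau>) * (1 - t2 \<tau>)) (t2 \<tau> * (1 - (1 - t1 \<tau>))) + 5 * \<delta>"
      using a b by (simp add: m_def min_def)
    also have "\<dots> \<le> max ((1 - \<epsilon>/4) * m \<tau>) (\<epsilon>/4) + 5 * \<delta>"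
      using min_step[of "1 - t1 \<tau>" "t2 \<tau>" "\<epsilon>/4"] R1 R2 eps by (simp add: m_def)
    finally show ?thesis by (simp add: r_def)
  qed
  define D where "D = 5 * \<delta> / (1 - r)"
  have D0: "0 \<le> D" using eps r0 by (simp add: D_def \<delta>_def r_def)
  have Dfix: "r * D + 5 * \<delta> = D" using r0 by (simp add: D_def field_simps)
  have mind: "m (1 + k) \<le> max (r ^ k) (\<epsilon>/4) + D" if "1 + k \<le> C" for k
    using that
  proof (induction k)
    case 0
    have "m 1 \<le> 1" using range2[of 1] Cge1 by (simp add: m_def min_le_iff_disj)
    then show ?case using D0 by simp
  next
    case (Suc k)
    have IH: "m (1 + k) \<le> max (r ^ k) (\<epsilon>/4) + D" using Suc by simp
    have "m (1 + Suc k) \<le> max (r * m (1 + k)) (\<epsilon>/4) + 5 * \<delta>"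
      using mstep[of "1 + k"] Suc.prems by simp
    also have "r * m (1 + k) \<le> r * (max (r ^ k) (\<epsilon>/4) + D)"
      using IH r0 by (simp add: mult_left_mono)
    also have "r * (max (r ^ k) (\<epsilon>/4) + D) = max (r ^ Suc k) (r * (\<epsilon>/4)) + r * D"
      using r0 by (simp add: distrib_left max_mult_distrib_left)
    finally have "m (1 + Suc k) \<le> max (max (r ^ Suc k) (r * (\<epsilon>/4)) + r * D) (\<epsilon>/4) + 5 * \<delta>"
      by (simp add: max_def)
    moreover have "r * (\<epsilon>/4) \<le> \<epsilon>/4" using r0 eps by (simp add: mult_left_le_one_le)
    moreover have "r * D \<le> D" using r0 D0 by (simp add: mult_left_le_one_le)
    moreover have "0 \<le> r * D" using r0 D0 by simp
    ultimately have "m (1 + Suc k) \<le> max (r ^ Suc k) (\<epsilon>/4) + r * D + 5 * \<delta>"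
      unfolding max_def by (auto split: if_splits)
    then show ?case using Dfix by simp
  qed
  have drift: "\<bar>t1 (1 + k) + t2 (1 + k) - (t1 1 + t2 1)\<bar> \<le> 6 * \<delta> * k" if "1 + k \<le> C" for k
    using that
  proof (induction k)
    case 0 then show ?case by simp
  next
    case (Suc k)
    have IH: "\<bar>t1 (1 + k) + t2 (1 + k) - (t1 1 + t2 1)\<bar> \<le> 6 * \<delta> * k" using Suc by simp
    have a: "\<bar>t1 (1 + k + 1) - (1 - (1 - t1 (1+k)) * (1 - t2 (1+k)))\<bar> \<le> 5 * \<delta>"
      using step1[of "1+k"] Suc.prems by (simp add: \<delta>_def)
    have b: "\<bar>t2 (1 + k + 1) - t1 (1+k) * t2 (1+k)\<bar> \<le> \<delta>"
      using step2[of "1+k"] Suc.prems by (simp add: \<delta>_def)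
    have e: "1 - (1 - t1 (1+k)) * (1 - t2 (1+k)) + t1 (1+k) * t2 (1+k) = t1 (1+k) + t2 (1+k)"
      by (simp add: algebra_simps)
    show ?case using IH a b e by (simp add: abs_le_iff algebra_simps)
  qed
  have CC: "1 + (C - 1) = C" using Cge1 by simp
  have mC: "m C \<le> max (r ^ (C-1)) (\<epsilon>/4) + D" using mind[of "C-1"] CC by simp
  have D_le: "D \<le> \<epsilon> / 4"
  proof -
    have "D = 5 / (3 * real C)" using eps Cpos by (simp add: D_def \<delta>_def r_def field_simps)
    also have "\<dots> \<le> \<epsilon> / 4" using Cbig Cpos eps by (simp add: field_simps)
    finally show ?thesis .
  qed
  have mC2: "m C \<le> \<epsilon> / 2" using mC rpow D_le by simp
  have dr: "\<bar>t1 C + t2 C - (t1 1 + t2 1)\<bar> \<le> 6 * \<delta> * real (C - 1)"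
    using drift[of "C-1"] CC by simp
  have dr2: "6 * \<delta> * real (C - 1) \<le> \<epsilon> / 2"
  proof -
    have "6 * \<delta> * real (C - 1) \<le> 6 * \<delta> * real C" using eps Cpos
      by (intro mult_left_mono) (auto simp: \<delta>_def)
    also have "\<dots> = \<epsilon> / 2" using Cpos by (simp add: \<delta>_def)
    finally show ?thesis .
  qed
  have "\<bar>min 1 (t1 1 + t2 1) - t1 C\<bar> \<le> 6 * \<delta> * real (C - 1) + m C"
    using final_comb[OF _ _ _ _ dr] range1[of C] range2[of C] Cge1 by (simp add: m_def)
  then show ?thesis using mC2 dr2 by simp
qed

end
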